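(* Let $\mathrm{Lab}$ be a labelling system on a finite simplicial tree $T$ with index set $\{1,\dots,N\}$. Then every edge of $T$ is useless if and only if there is a full vertex, i.e. a vertex $z$ with $\mathrm{Lab}(z)=\{1,\dots,N\}$.
   Context: A labelling system on a finite simplicial tree $T$ assigns to each vertex $v$ a subset $\mathrm{Lab}(v)\subset\{1,\dots,N\}$ such that (A) $\mathrm{Lab}(a)\cap\mathrm{Lab}(b)\subset\mathrm{Lab}(x)$ whenever $x$ is a vertex on the shortest path $[ab]$ between vertices $a,b$, and (B) $\bigcup_v\mathrm{Lab}(v)=\{1,\dots,N\}$. Removing the open edge $e$ from $T$ leaves two closed connected components $T^+(e)$, $T^-(e)$. The edge $e$ is useless if $\bigcup_{v\in T^+(e)}\mathrm{Lab}(v)$ or $\bigcup_{v\in T^-(e)}\mathrm{Lab}(v)$ equals $\{1,\dots,N\}$, and useful otherwise. *)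

theory Defs
  imports Main
begin

text \<open>A finite simplicial tree: finite nonempty vertex set V, symmetric irreflexive
edge relation E (pairs of vertices, each undirected edge stored in both directions),
connected and without cycles.\<close>

definition walk :: "('a \<times> 'a) set \<Rightarrow> 'a list \<Rightarrow> 'a \<Rightarrow> 'a \<Rightarrow> bool" where
  "walk E p a b \<longleftrightarrow> p \<noteq> [] \<and> hd p = a \<and> last p = b \<and>
     (\<forall>i. Suc i < length p \<longrightarrow> (p ! i, p ! Suc i) \<in> E)"

definition is_cycle :: "('a \<times> 'a) set \<Rightarrow> 'a list \<Rightarrow> bool" where
  "is_cycle E p \<longleftrightarrow> distinct p \<and> 3 \<le> length p \<and> walk E p (hd p) (last p)
     \<and> (last p, hd p) \<in> E"

definition simplicial_tree :: "'a set \<Rightarrow> ('a \<times> 'a) set \<Rightarrow> bool" where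
  "simplicial_tree V E \<longleftrightarrow> finite V \<and> V \<noteq> {} \<and> E \<subseteq> V \<times> V \<and> sym E
     \<and> (\<forall>x. (x, x) \<notin> E) \<and> (\<forall>a\<in>V. \<forall>b\<in>V. (a, b) \<in> E\<^sup>*)
     \<and> (\<nexists>p. is_cycle E p)"

definition geodesic :: "('a \<times> 'a) set \<Rightarrow> 'a list \<Rightarrow> 'a \<Rightarrow> 'a \<Rightarrow> bool" where
  "geodesic E p a b \<longleftrightarrow> walk E p a b \<and> (\<forall>q. walk E q a b \<longrightarrow> length p \<le> length q)"

definition on_path :: "('a \<times> 'a) set \<Rightarrow> 'a \<Rightarrow> 'a \<Rightarrow> 'a \<Rightarrow> bool" where
  "on_path E a b x \<longleftrightarrow> (\<exists>p. geodesic E p a b \<and> x \<in> set p)"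

definition labelling_system ::
  "'a set \<Rightarrow> ('a \<times> 'a) set \<Rightarrow> nat \<Rightarrow> ('a \<Rightarrow> nat set) \<Rightarrow> bool" where
  "labelling_system V E N Lab \<longleftrightarrow>
     (\<forall>a\<in>V. \<forall>b\<in>V. \<forall>x. on_path E a b x \<longrightarrow> Lab a \<inter> Lab b \<subseteq> Lab x)
     \<and> (\<Union>v\<in>V. Lab v) = {1..N}"

definition side :: "('a \<times> 'a) set \<Rightarrow> 'a \<Rightarrow> 'a \<Rightarrow> 'a set" where
  "side E u v = {x. (u, x) \<in> (E - {(u, v), (v, u)})\<^sup>*}"

definition useless_edge ::
  "('a \<times> 'a) set \<Rightarrow> nat \<Rightarrow> ('a \<Rightarrow> nat set) \<Rightarrow> 'a \<Rightarrow> 'a \<Rightarrow> bool" where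
  "useless_edge E N Lab u v \<longleftrightarrow>
     (\<Union>x\<in>side E u v. Lab x) = {1..N} \<or> (\<Union>x\<in>side E v u. Lab x) = {1..N}"

end

theory Submission
  imports Defs
begin

lemma walk_distinct:
  assumes "(a,b) \<in> R\<^sup>*" shows "\<exists>p. walk R p a b \<and> distinct p"
  using assms
proof (induction rule: converse_rtrancl_induct)
  case base
  show ?case by (rule exI[of _ "[b]"]) (simp add: walk_def)
next
  case (step a y)
  then obtain p where p: "walk R p y b" "distinct p" by blast
  show ?case
  proof (cases "a \<in> set p")
    case True
    then obtain k where k: "k < length p" "p!k = a" by (metis in_set_conv_nth)
    have "walk R (drop k p) a b" using p k unfolding walk_def
      by (auto simp: hd_drop_conv_nth last_drop)
    then show ?thesis using p by (metis distinct_drop)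
  next
    case False
    have "walk R (a#p) a b" unfolding walk_def
    proof (intro conjI allI impI)
      show "last (a#p) = b" using p by (auto simp: walk_def)
      fix i assume "Suc i < length (a#p)"
      then show "((a#p)!i, (a#p)!Suc i) \<in> R" using p step(1)
        by (cases i) (auto simp: walk_def hd_conv_nth)
    qed auto
    then show ?thesis using p False by auto
  qed
qed

lemma walk_mono: "walk R p a b \<Longrightarrow> R \<subseteq> S \<Longrightarrow> walk S p a b"
  unfolding walk_def by blast

lemma side_refl: "u \<in> side E u v" unfolding side_def by simp

lemma side_step: "x \<in> side E u v \<Longrightarrow> (x,y) \<in> E \<Longrightarrow> (x,y) \<notin> {(u,v),(v,u)} \<Longrightarrow> y \<in> side E u v"
  unfolding side_def by (auto intro: rtrancl_into_rtrancl)

lemma side_comm: "side E u v = {x. (u, x) \<in> (E - {(v, u), (u, v)})\<^sup>*}"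
  unfolding side_def by (simp add: insert_commute)

lemma not_back:
  assumes T: "simplicial_tree V E" and e: "(u,w) \<in> E"
  shows "u \<notin> side E w u"
proof
  assume "u \<in> side E w u"
  hence "(w,u) \<in> (E - {(w,u),(u,w)})\<^sup>*" unfolding side_def by simp
  from walk_distinct[OF this] obtain p where p: "walk (E - {(w,u),(u,w)}) p w u" "distinct p"
    by blast
  have uw: "u \<noteq> w" proof
    assume "u = w" moreover have "\<forall>x. (x, x) \<notin> E" using T unfolding simplicial_tree_def by blast
    ultimately show False using e by blast
  qed
  have pw: "walk E p w u" by (rule walk_mono[OF p(1) Diff_subset])
  have ne: "p \<noteq> []" and hd: "hd p = w" and lst: "last p = u" using p unfolding walk_def by auto
  have "length p \<noteq> 1"
  proof
    assume "length p = 1" then obtain x where "p = [x]" by (cases p) auto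
    then show False using hd lst uw by simp
  qed
  moreover have "length p \<noteq> 2"
  proof
    assume l2: "length p = 2"
    have "(p!0, p!Suc 0) \<in> E - {(w,u),(u,w)}" using p(1) l2 unfolding walk_def by (metis One_nat_def lessI numeral_2_eq_2)
    moreover have "p!0 = w" using hd ne by (simp add: hd_conv_nth)
    moreover have "p!Suc 0 = u" using lst ne l2 by (simp add: last_conv_nth)
    ultimately show False by simp
  qed
  moreover have "length p \<noteq> 0" using ne by simp
  ultimately have "3 \<le> length p" by linarith
  hence "is_cycle E p" unfolding is_cycle_def using p(2) pw hd lst e
    by (simp add: walk_def)
  thus False using T unfolding simplicial_tree_def by blast
qed

lemma rt_in_V: "(u,x) \<in> E\<^sup>* \<Longrightarrow> E \<subseteq> V \<times> V \<Longrightarrow> u \<in> V \<Longrightarrow> x \<in> V"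
  by (induction rule: rtrancl_induct) auto

lemma side_V: assumes "E \<subseteq> V \<times> V" "u \<in> V" shows "side E u v \<subseteq> V"
proof
  fix x assume "x \<in> side E u v"
  hence "(u,x) \<in> E\<^sup>*" unfolding side_def using rtrancl_mono[of "E - _" E] by blast
  thus "x \<in> V" by (rule rt_in_V[OF _ assms])
qed

lemma side_disj:
  assumes T: "simplicial_tree V E" and e: "(z,w) \<in> E"
    and x1: "x \<in> side E z w" and x2: "x \<in> side E w z"
  shows False
proof -
  let ?R = "E - {(w,z),(z,w)}"
  have sR: "sym ?R" using T unfolding simplicial_tree_def sym_def by blast
  have "(z,x) \<in> ?R\<^sup>*" using x1 unfolding side_comm by simp
  hence "(x,z) \<in> ?R\<^sup>*" using sR sym_rtrancl unfolding sym_def by blast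
  moreover have "(w,x) \<in> ?R\<^sup>*" using x2 unfolding side_def by simp
  ultimately have "z \<in> side E w z" unfolding side_def by auto
  moreover have "(z,w) \<in> E" using e .
  ultimately show False using not_back[OF T e] by blast
qed

lemma branch:
  assumes "(z,a) \<in> E\<^sup>*"
  shows "a = z \<or> (\<exists>w'. (z,w') \<in> E \<and> a \<in> side E w' z)"
  using assms
proof (induction rule: rtrancl_induct)
  case base then show ?case by simp
next
  case (step x y)
  from step(3) show ?case
  proof
    assume "x = z" then have "(z,y) \<in> E" using step(2) by (simp only:)
    then show ?thesis using side_refl[of y E z] by blast
  next
    assume "\<exists>w'. (z,w') \<in> E \<and> x \<in> side E w' z"
    then obtain w' where w': "(z,w') \<in> E" "x \<in> side E w' z" by (elim exE conjE)
    show ?thesis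
    proof (cases "(x,y) \<in> {(w',z),(z,w')}")
      case True then have "y = z \<or> y = w'" by auto
      then show ?thesis using w'(1) side_refl[of w' E z] by blast
    next
      case False then show ?thesis using w'(1) side_step[OF w'(2) step(2) False] by blast
    qed
  qed
qed

lemma cross_idx: "p \<noteq> [] \<Longrightarrow> hd p \<in> S \<Longrightarrow> last p \<notin> S \<Longrightarrow>
   \<exists>i. Suc i < length p \<and> p!i \<in> S \<and> p!Suc i \<notin> S"
proof (induction p)
  case Nil then show ?case by simp
next
  case (Cons x xs)
  show ?case
  proof (cases "xs = []")
    case True then show ?thesis using Cons by simp
  next
    case False
    show ?thesis
    proof (cases "hd xs \<in> S")
      case True
      then obtain i where "Suc i < length xs" "xs!i \<in> S" "xs!Suc i \<notin> S"
        using Cons False by auto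
      then show ?thesis by (intro exI[of _ "Suc i"]) auto
    next
      case F2: False
      then show ?thesis using Cons False by (intro exI[of _ 0]) (auto simp: hd_conv_nth)
    qed
  qed
qed

lemma cross_walk:
  assumes p: "walk E p a b" and a: "a \<in> side E w z" and b: "b \<notin> side E w z"
  shows "z \<in> set p"
proof -
  obtain i where i: "Suc i < length p" "p!i \<in> side E w z" "p!Suc i \<notin> side E w z"
    using cross_idx[of p "side E w z"] p a b unfolding walk_def by auto
  have e: "(p!i, p!Suc i) \<in> E" using p i unfolding walk_def by auto
  have "(p!i, p!Suc i) \<in> {(w,z),(z,w)}" using side_step[OF i(2) e] i(3) by blast
  moreover have "p!Suc i \<noteq> w" using i(3) side_refl by metis
  ultimately have "p!Suc i = z" by auto
  thus ?thesis using i(1) by (metis nth_mem)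
qed

lemma sink_full:
  assumes T: "simplicial_tree V E" and L: "labelling_system V E N Lab"
    and z: "z \<in> V"
    and sink: "\<And>w. (z,w) \<in> E \<Longrightarrow> (\<Union>x\<in>side E z w. Lab x) = {1..N}"
  shows "Lab z = {1..N}"
proof
  have U: "(\<Union>v\<in>V. Lab v) = {1..N}" using L unfolding labelling_system_def by blast
  show "Lab z \<subseteq> {1..N}" using U z by blast
  show "{1..N} \<subseteq> Lab z"
  proof
    fix i assume i: "i \<in> {1..N}"
    then obtain a where a: "a \<in> V" "i \<in> Lab a" using U by blast
    have EV: "E \<subseteq> V \<times> V" using T unfolding simplicial_tree_def by blast
    have "(z,a) \<in> E\<^sup>*" using T z a unfolding simplicial_tree_def by blast
    from branch[OF this] show "i \<in> Lab z"
    proof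
      assume "a = z" then show ?thesis using a by simp
    next
      assume "\<exists>w'. (z,w') \<in> E \<and> a \<in> side E w' z"
      then obtain w where w: "(z,w) \<in> E" "a \<in> side E w z" by blast
      obtain b where b: "b \<in> side E z w" "i \<in> Lab b" using sink[OF w(1)] i by blast
      have bV: "b \<in> V" using side_V[OF EV z] b by blast
      have bn: "b \<notin> side E w z" using side_disj[OF T w(1) b(1)] by blast
      have "(a,b) \<in> E\<^sup>*" using T a bV unfolding simplicial_tree_def by blast
      from walk_distinct[OF this] obtain q where "walk E q a b" by blast
      then obtain p where p: "walk E p a b" "\<forall>q. walk E q a b \<longrightarrow> length p \<le> length q"
        using ex_has_least_nat[of "\<lambda>q. walk E q a b" _ length] by blast
      have "z \<in> set p" using cross_walk[OF p(1) w(2) bn] .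
      hence "on_path E a b z" unfolding on_path_def geodesic_def using p by blast
      hence "Lab a \<inter> Lab b \<subseteq> Lab z" using L a bV unfolding labelling_system_def by blast
      thus ?thesis using a b by blast
    qed
  qed
qed

lemma side_sub:
  assumes T: "simplicial_tree V E" and uv: "(u,v) \<in> E" and uw: "(u,w) \<in> E" and wv: "w \<noteq> v"
  shows "side E w u \<subset> side E u v"
proof -
  have nb: "u \<notin> side E w u" using not_back[OF T uw] .
  have irr: "u \<noteq> w" proof
    assume "u = w" moreover have "\<forall>x. (x, x) \<notin> E" using T unfolding simplicial_tree_def by blast
    ultimately show False using uw by blast
  qed
  have "x \<in> side E u v" if "x \<in> side E w u" for x
  proof -
    have "(w,x) \<in> (E - {(w,u),(u,w)})\<^sup>*" using that unfolding side_def by simp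
    thus ?thesis
    proof (induction rule: rtrancl_induct)
      case base
      show ?case using side_step[OF side_refl uw] wv irr by auto
    next
      case (step y x)
      have "y \<in> side E w u" "x \<in> side E w u" using step(1,2) unfolding side_def
        by (auto intro: rtrancl_into_rtrancl)
      hence "y \<noteq> u" "x \<noteq> u" using nb by auto
      then show ?case using side_step[OF step(3)] step(2) by auto
    qed
  qed
  thus ?thesis using nb side_refl[of u E v] by blast
qed

theorem mainTheorem10:
  fixes V :: "'a set" and E :: "('a \<times> 'a) set" and N :: nat and Lab :: "'a \<Rightarrow> nat set"
  assumes "simplicial_tree V E"
    and "labelling_system V E N Lab"
  shows "(\<forall>(u, v)\<in>E. useless_edge E N Lab u v) \<longleftrightarrow> (\<exists>z\<in>V. Lab z = {1..N})"
proof
  note T = assms(1) and L = assms(2)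
  have U: "(\<Union>v\<in>V. Lab v) = {1..N}" using L unfolding labelling_system_def by blast
  have EV: "E \<subseteq> V \<times> V" and fin: "finite V" and Vne: "V \<noteq> {}"
    and sE: "sym E" and conn: "\<forall>a\<in>V. \<forall>b\<in>V. (a, b) \<in> E\<^sup>*"
    using T unfolding simplicial_tree_def by blast+
  assume all: "\<forall>(u, v)\<in>E. useless_edge E N Lab u v"
  show "\<exists>z\<in>V. Lab z = {1..N}"
  proof (cases "E = {}")
    case True
    obtain z where z: "z \<in> V" using Vne by blast
    have "V = {z}" using conn z True by auto
    then show ?thesis using U by auto
  next
    case False
    define P where "P e \<longleftrightarrow> e \<in> E \<and> (\<Union>x\<in>side E (fst e) (snd e). Lab x) = {1..N}" for e
    define m where "m e = card (side E (fst e) (snd e))" for e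
    obtain u0 v0 where e0: "(u0,v0) \<in> E" using False by auto
    have e0': "(v0,u0) \<in> E" using sE e0 unfolding sym_def by blast
    have "useless_edge E N Lab u0 v0" using all e0 by blast
    hence "P (u0,v0) \<or> P (v0,u0)" using e0 e0' unfolding useless_edge_def P_def by simp
    then obtain e1 where "P e1" by blast
    from ex_has_least_nat[of P e1 m, OF this]
    obtain e where e: "P e" and emin: "\<forall>e'. P e' \<longrightarrow> m e \<le> m e'" by blast
    obtain u v where ee: "e = (u,v)" by (cases e)
    have uv: "(u,v) \<in> E" and fu: "(\<Union>x\<in>side E u v. Lab x) = {1..N}" using e ee unfolding P_def by auto
    have uV: "u \<in> V" using uv EV by blast
    have "Lab u = {1..N}"
    proof (rule sink_full[OF T L uV])
      fix w assume uw: "(u,w) \<in> E"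
      show "(\<Union>x\<in>side E u w. Lab x) = {1..N}"
      proof (cases "w = v")
        case True then show ?thesis using fu by simp
      next
        case False
        have wu: "(w,u) \<in> E" using sE uw unfolding sym_def by blast
        show ?thesis
        proof (rule ccontr)
          assume nf: "(\<Union>x\<in>side E u w. Lab x) \<noteq> {1..N}"
          have "useless_edge E N Lab u w" using all uw by blast
          hence "P (w,u)" using nf wu unfolding useless_edge_def P_def by auto
          hence "m e \<le> m (w,u)" using emin by blast
          hence "card (side E u v) \<le> card (side E w u)" using ee unfolding m_def by simp
          moreover have sub: "side E w u \<subset> side E u v" using side_sub[OF T uv uw False] .
          moreover have fs: "finite (side E u v)" using side_V[OF EV uV] fin finite_subset by blast
          have "card (side E w u) < card (side E u v)" by (rule psubset_card_mono[OF fs sub])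
          ultimately show False by linarith
        qed
      qed
    qed
    then show ?thesis using uV by blast
  qed
next
  note T = assms(1) and L = assms(2)
  have U: "(\<Union>v\<in>V. Lab v) = {1..N}" using L unfolding labelling_system_def by blast
  have EV: "E \<subseteq> V \<times> V" and conn: "\<forall>a\<in>V. \<forall>b\<in>V. (a, b) \<in> E\<^sup>*"
    using T unfolding simplicial_tree_def by blast+
  assume "\<exists>z\<in>V. Lab z = {1..N}"
  then obtain z where z: "z \<in> V" "Lab z = {1..N}" by blast
  show "\<forall>(u, v)\<in>E. useless_edge E N Lab u v"
  proof clarify
    fix u v assume uv: "(u,v) \<in> E"
    have uV: "u \<in> V" and vV: "v \<in> V" using uv EV by auto
    have "(u,z) \<in> E\<^sup>*" using conn uV z by blast
    hence "z \<in> side E u v \<or> z \<in> side E v u"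
    proof (induction rule: rtrancl_induct)
      case base then show ?case using side_refl[of u E v] by blast
    next
      case (step x y)
      show ?case
      proof (cases "(x,y) \<in> {(u,v),(v,u)}")
        case True then have "y = v \<or> y = u" by auto
        then show ?thesis using side_refl[of u E v] side_refl[of v E u] by blast
      next
        case False
        then show ?thesis using step side_step[of x E u v y] side_step[of x E v u y] by auto
      qed
    qed
    moreover have s1: "(\<Union>x\<in>side E u v. Lab x) \<subseteq> {1..N}" using side_V[OF EV uV, of v] U by blast
    moreover have s2: "(\<Union>x\<in>side E v u. Lab x) \<subseteq> {1..N}" using side_V[OF EV vV, of u] U by blast
    moreover have full: "(\<Union>x\<in>S. Lab x) = {1..N}" if "z \<in> S" "(\<Union>x\<in>S. Lab x) \<subseteq> {1..N}" for S
    proof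
      show "{1..N} \<subseteq> (\<Union>x\<in>S. Lab x)" using that z(2) by blast
    qed (rule that(2))
    ultimately show "useless_edge E N Lab u v" unfolding useless_edge_def by metis
  qed
qed

end
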